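(* Let $N=\{1,\dots,n\}$ be a set of agents, $m>0$ a capacity, $\tau\ge 0$ and $g\ge 0$ fees, and for each $i\in N$ let $V_i:\mathbb{R}_+\to\mathbb{R}$ be strictly concave and differentiable with $V_i'(0)=\infty$ and $C_i:\mathbb{R}_+\to\mathbb{R}$ convex, differentiable and Lipschitz continuous. Let $U_i(x_i;\mu)=V_i(x_i)-C_i(x_i)-(\tau+\mu)x_i-g\,\mathbf{1}\{x_i>0\}$, $BR_i(\mu)=\arg\max_{x_i\ge 0}U_i(x_i;\mu)$ and $S(\mu)=\sum_{i=1}^nBR_i(\mu)$. If each $U_i$ is strictly concave in $x_i$, then the contract-clearing equilibrium $(\mathbf{x}^\star,\mu^\star)$ is unique.
   Context: A contract-clearing equilibrium is a pair $(\mathbf{x}^\star,\mu^\star)$ with $\mathbf{x}^\star\in\mathbb{R}_+^n$ and $\mu^\star\ge 0$ such that $x_i^\star=BR_i(\mu^\star)$ for all $i\in N$ and $S(\mu^\star)=\sum_i x_i^\star=m$. $\tau$ is a per-unit transaction fee, $g$ a fixed execution fee charged when $x_i>0$, and $\mu$ a shadow price enforcing capacity. *)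

theory Defs
  imports "HOL-Analysis.Analysis"
begin

definition strict_concave_on :: "real set \<Rightarrow> (real \<Rightarrow> real) \<Rightarrow> bool" where
  "strict_concave_on S f \<longleftrightarrow> convex S \<and>
    (\<forall>x\<in>S. \<forall>y\<in>S. x \<noteq> y \<longrightarrow> (\<forall>t::real. 0 < t \<and> t < 1 \<longrightarrow>
        f ((1 - t) * x + t * y) > (1 - t) * f x + t * f y))"

definition payoff ::
  "(real \<Rightarrow> real) \<Rightarrow> (real \<Rightarrow> real) \<Rightarrow> real \<Rightarrow> real \<Rightarrow> real \<Rightarrow> real \<Rightarrow> real" where
  "payoff V C \<tau> g \<mu> x = V x - C x - (\<tau> + \<mu>) * x - g * of_bool (x > 0)"

definition is_best_response ::
  "(real \<Rightarrow> real) \<Rightarrow> (real \<Rightarrow> real) \<Rightarrow> real \<Rightarrow> real \<Rightarrow> real \<Rightarrow> real \<Rightarrow> bool" where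
  "is_best_response V C \<tau> g \<mu> x \<longleftrightarrow>
     x \<ge> 0 \<and> (\<forall>y\<ge>0. payoff V C \<tau> g \<mu> y \<le> payoff V C \<tau> g \<mu> x)"

definition contract_clearing_eq ::
  "nat \<Rightarrow> (nat \<Rightarrow> real \<Rightarrow> real) \<Rightarrow> (nat \<Rightarrow> real \<Rightarrow> real) \<Rightarrow> real \<Rightarrow> real \<Rightarrow> real
    \<Rightarrow> (nat \<Rightarrow> real) \<Rightarrow> real \<Rightarrow> bool" where
  "contract_clearing_eq n V C \<tau> g m x \<mu> \<longleftrightarrow>
     \<mu> \<ge> 0 \<and> (\<forall>i\<in>{1..n}. x i \<ge> 0 \<and> is_best_response (V i) (C i) \<tau> g \<mu> (x i))
     \<and> (\<Sum>i\<in>{1..n}. x i) = m"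

end

theory Submission
  imports Defs
begin

lemma payoff_deriv_zero:
  fixes V C :: "real \<Rightarrow> real"
  assumes x: "x > 0" and br: "is_best_response V C \<tau> g \<mu> x"
    and DV: "(V has_real_derivative dv) (at x)"
    and DC: "(C has_real_derivative dc) (at x)"
  shows "dv - dc - (\<tau> + \<mu>) = 0"
proof -
  let ?k = "\<lambda>y. V y - C y - (\<tau> + \<mu>) * y - g"
  have D: "(?k has_real_derivative (dv - dc - (\<tau> + \<mu>))) (at x)"
    by (auto intro!: derivative_eq_intros DV DC)
  have "\<forall>y. \<bar>x - y\<bar> < x \<longrightarrow> ?k y \<le> ?k x"
  proof (intro allI impI)
    fix y assume "\<bar>x - y\<bar> < x"
    hence "y > 0" by linarith
    hence "payoff V C \<tau> g \<mu> y \<le> payoff V C \<tau> g \<mu> x" using br unfolding is_best_response_def by auto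
    thus "?k y \<le> ?k x" using \<open>y > 0\<close> x by (simp add: payoff_def)
  qed
  from DERIV_local_max[OF D x this] show ?thesis by simp
qed

lemma br_mono:
  assumes b1: "is_best_response V C \<tau> g \<mu>1 x1" and b2: "is_best_response V C \<tau> g \<mu>2 x2"
    and lt: "\<mu>1 < \<mu>2"
  shows "x2 \<le> x1"
proof -
  have "payoff V C \<tau> g \<mu>2 x1 \<le> payoff V C \<tau> g \<mu>2 x2"
    using b1 b2 unfolding is_best_response_def by auto
  moreover have "payoff V C \<tau> g \<mu>1 x2 \<le> payoff V C \<tau> g \<mu>1 x1"
    using b1 b2 unfolding is_best_response_def by auto
  ultimately have "(\<mu>2 - \<mu>1) * (x1 - x2) \<ge> 0"
    unfolding payoff_def by (simp add: algebra_simps)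
  thus ?thesis using lt by (simp add: zero_le_mult_iff)
qed

lemma sum_le_eq:
  fixes a b :: "nat \<Rightarrow> real"
  assumes "\<forall>i\<in>A. a i \<le> b i" "sum a A = sum b A" "finite A"
  shows "\<forall>i\<in>A. a i = b i"
  using sum_mono_inv[of a A b] assms by blast

theorem theorem4p7:
  fixes n :: nat and m \<tau> g :: real
    and V C :: "nat \<Rightarrow> real \<Rightarrow> real"
  assumes m_pos: "m > 0" and tau_nonneg: "\<tau> \<ge> 0" and g_nonneg: "g \<ge> 0"
    and V_sconc: "\<forall>i\<in>{1..n}. strict_concave_on {0..} (V i)"
    and V_diff: "\<forall>i\<in>{1..n}. \<forall>x>0. V i differentiable (at x)"
    and V_inf: "\<forall>i\<in>{1..n}.
        filterlim (\<lambda>h. (V i h - V i 0) / h) at_top (at_right 0)"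
    and C_conv: "\<forall>i\<in>{1..n}. convex_on {0..} (C i)"
    and C_diff: "\<forall>i\<in>{1..n}. \<forall>x\<ge>0. C i differentiable (at x within {0..})"
    and C_lip: "\<forall>i\<in>{1..n}. \<exists>L. L-lipschitz_on {0..} (C i)"
    and U_sconc: "\<forall>i\<in>{1..n}. \<forall>\<mu>\<ge>0.
        strict_concave_on {0..} (\<lambda>x. payoff (V i) (C i) \<tau> g \<mu> x)"
    and eq1: "contract_clearing_eq n V C \<tau> g m x1 \<mu>1"
    and eq2: "contract_clearing_eq n V C \<tau> g m x2 \<mu>2"
  shows "\<mu>1 = \<mu>2 \<and> (\<forall>i\<in>{1..n}. x1 i = x2 i)"
proof -
  have br1: "\<forall>i\<in>{1..n}. is_best_response (V i) (C i) \<tau> g \<mu>1 (x1 i)"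
    and br2: "\<forall>i\<in>{1..n}. is_best_response (V i) (C i) \<tau> g \<mu>2 (x2 i)"
    and s1: "(\<Sum>i\<in>{1..n}. x1 i) = m" and s2: "(\<Sum>i\<in>{1..n}. x2 i) = m"
    and nn: "\<forall>i\<in>{1..n}. x1 i \<ge> 0"
    using eq1 eq2 unfolding contract_clearing_eq_def by auto
  have xeq: "\<forall>i\<in>{1..n}. x1 i = x2 i" if "\<mu>1 \<noteq> \<mu>2"
  proof (cases "\<mu>1 < \<mu>2")
    case True
    hence "\<forall>i\<in>{1..n}. x2 i \<le> x1 i" using br1 br2 br_mono by blast
    with sum_le_eq[OF this] s1 s2 show ?thesis by auto
  next
    case False
    hence "\<mu>2 < \<mu>1" using that by auto
    hence "\<forall>i\<in>{1..n}. x1 i \<le> x2 i" using br1 br2 br_mono by blast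
    with sum_le_eq[OF this] s1 s2 show ?thesis by auto
  qed
  have "\<mu>1 = \<mu>2"
  proof (rule ccontr)
    assume ne: "\<mu>1 \<noteq> \<mu>2"
    have "\<exists>i\<in>{1..n}. x1 i > 0"
    proof (rule ccontr)
      assume "\<not> ?thesis"
      hence "\<forall>i\<in>{1..n}. x1 i = 0" using nn by force
      hence "(\<Sum>i\<in>{1..n}. x1 i) = 0" by simp
      thus False using s1 m_pos by simp
    qed
    then obtain i where i: "i \<in> {1..n}" "x1 i > 0" by blast
    obtain dv where DV: "(V i has_real_derivative dv) (at (x1 i))"
      using V_diff i real_differentiable_def by blast
    obtain dc where DC0: "(C i has_real_derivative dc) (at (x1 i) within {0..})"
      using C_diff i real_differentiable_def by (metis less_eq_real_def)
    have "at (x1 i) within {0..} = at (x1 i)"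
      using i by (intro at_within_interior) auto
    with DC0 have DC: "(C i has_real_derivative dc) (at (x1 i))" by simp
    have "dv - dc - (\<tau> + \<mu>1) = 0"
      using payoff_deriv_zero[OF i(2) _ DV DC] br1 i by blast
    moreover have "dv - dc - (\<tau> + \<mu>2) = 0"
      using payoff_deriv_zero[OF i(2) _ DV DC, of \<tau> g \<mu>2] br2 i xeq[OF ne] by auto
    ultimately show False using ne by simp
  qed
  moreover have "\<forall>i\<in>{1..n}. x1 i = x2 i"
  proof
    fix i assume i: "i \<in> {1..n}"
    show "x1 i = x2 i"
    proof (rule ccontr)
      assume ne: "x1 i \<noteq> x2 i"
      have sc: "strict_concave_on {0..} (\<lambda>x. payoff (V i) (C i) \<tau> g \<mu>1 x)"
        using U_sconc i eq1 unfolding contract_clearing_eq_def by auto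
      have b1: "is_best_response (V i) (C i) \<tau> g \<mu>1 (x1 i)" using br1 i by blast
      have b2: "is_best_response (V i) (C i) \<tau> g \<mu>1 (x2 i)" using br2 i \<open>\<mu>1 = \<mu>2\<close> by simp
      let ?f = "\<lambda>x. payoff (V i) (C i) \<tau> g \<mu>1 x"
      have "?f ((1 - 1/2) * x1 i + 1/2 * x2 i) > (1 - 1/2) * ?f (x1 i) + 1/2 * ?f (x2 i)"
      proof -
        have "\<forall>x\<in>{0..}. \<forall>y\<in>{0..}. x \<noteq> y \<longrightarrow> (\<forall>t::real. 0 < t \<and> t < 1 \<longrightarrow>
          ?f ((1 - t) * x + t * y) > (1 - t) * ?f x + t * ?f y)"
          using sc unfolding strict_concave_on_def by blast
        moreover have "x1 i \<in> {0..}" "x2 i \<in> {0..}" using b1 b2 unfolding is_best_response_def by auto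
        ultimately have "\<forall>t::real. 0 < t \<and> t < 1 \<longrightarrow>
          ?f ((1 - t) * x1 i + t * x2 i) > (1 - t) * ?f (x1 i) + t * ?f (x2 i)" using ne by blast
        hence "0 < (1/2::real) \<and> (1/2::real) < 1 \<longrightarrow>
          ?f ((1 - 1/2) * x1 i + 1/2 * x2 i) > (1 - 1/2) * ?f (x1 i) + 1/2 * ?f (x2 i)" by (rule spec)
        thus ?thesis by simp
      qed
      moreover have "?f (x1 i) \<ge> ?f (x2 i)" "?f (x2 i) \<ge> ?f (x1 i)"
        using b1 b2 unfolding is_best_response_def by auto
      moreover have "?f ((1 - 1/2) * x1 i + 1/2 * x2 i) \<le> ?f (x1 i)"
        using b1 b2 unfolding is_best_response_def by auto
      ultimately show False by (simp add: field_simps)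
    qed
  qed
  ultimately show ?thesis by blast
qed

end
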